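(* Consider $K$ simultaneous hypothesis testing problems $H_{0k}:\theta_k=0$ versus $H_{Ak}:\theta_k\in\Theta_k$, $k\in[K]=\{1,\dots,K\}$, with unknown true states $h=(h_1,\dots,h_K)\in\{0,1\}^K$ ($h_k=0$ iff $H_{0k}$ holds). Assume: (A1) for each $k$ there is a p-value $p_k$ which is uniformly distributed on $[0,1]$ when $h_k=0$; the $K$ p-values are independent; and whenever $h_k=1$ there is a sequence $\theta_{k_1},\theta_{k_2},\dots\in\Theta_k$ with $\lim_{j\to\infty}\mathbb{P}_{\theta_{k_j}}(p_k<\epsilon)=1$ for every $\epsilon>0$. Let $D=(D_1,\dots,D_K):[0,1]^K\to\{0,1\}^K$ be a monotone testing policy satisfying (A2) for all $i,k\in[K]$ and all $\mathbf p\in[0,1]^K$, $\lim_{p_i\downarrow 0}D_k(\mathbf p)=D_k(p_1,\dots,p_{i-1},0,p_{i+1},\dots,p_K)$. Then $D$ strongly controls the FWER at level $\alpha$ if and only if $$\int_{[0,1]^{|\mathcal I|}}\max_{k\in\mathcal I}D_k(\mathbf p^0_{\mathcal I})\,d\mathbf p_{\mathcal I}\le\alpha\quad\text{for all }\mathcal I\subseteq[K].$$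
   Context: A testing policy $D:[0,1]^K\to\{0,1\}^K$ rejects $H_{0k}$ iff $D_k(\mathbf p)=1$. $D$ is monotone if $\mathbf p'\preceq\mathbf p$ (coordinatewise $p'_k\le p_k$) implies $D(\mathbf p')\succeq D(\mathbf p)$ coordinatewise. $D$ strongly controls the FWER at level $\alpha$ if $\mathbb{P}_{\theta,h}\big(\sum_{k=1}^K(1-h_k)D_k(\mathbf p)>0\big)\le\alpha$ for every $h\in\{0,1\}^K$ and every $\theta$ with $\theta_k=0$ when $h_k=0$ and $\theta_k\in\Theta_k$ when $h_k=1$. For $\mathcal I=\{j_1,\dots,j_{|\mathcal I|}\}\subseteq[K]$, the projected vector $\mathbf p^0_{\mathcal I}\in[0,1]^K$ has $k$-th coordinate $p_k$ if $k\in\mathcal I$ and $0$ otherwise; the reduced vector $\mathbf p_{\mathcal I}=(p_{j_1},\dots,p_{j_{|\mathcal I|}})$, and the integral is over the coordinates in $\mathcal I$ (Lebesgue measure on $[0,1]^{|\mathcal I|}$). *)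

theory Defs
  imports "HOL-Probability.Probability"
begin

(* Hypotheses are indexed by k < K (i.e. [K] is rendered as {..<K}).
  A testing policy is D :: (nat \<Rightarrow> real) \<Rightarrow> nat \<Rightarrow> bool, where D p k = True means D_k(p) = 1.
  The truth state h_k \<in> {0,1} is rendered as h k :: bool (h k = True iff h_k = 1). *)

definition unit_cube :: "nat \<Rightarrow> (nat \<Rightarrow> real) set" where
  "unit_cube K = PiE {..<K} (\<lambda>_. {0..1})"

definition unif01 :: "real measure" where
  "unif01 = restrict_space lborel {0..1}"

definition monotone_policy :: "nat \<Rightarrow> ((nat \<Rightarrow> real) \<Rightarrow> nat \<Rightarrow> bool) \<Rightarrow> bool" where
  "monotone_policy K D \<longleftrightarrow>
     (\<forall>p\<in>unit_cube K. \<forall>p'\<in>unit_cube K. (\<forall>k<K. p' k \<le> p k) \<longrightarrow> (\<forall>k<K. D p k \<longrightarrow> D p' k))"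

definition joint_law :: "nat \<Rightarrow> (nat \<Rightarrow> 'a \<Rightarrow> real measure) \<Rightarrow> (nat \<Rightarrow> 'a) \<Rightarrow> (nat \<Rightarrow> real) measure" where
  "joint_law K P \<theta> = PiM {..<K} (\<lambda>k. P k (\<theta> k))"

definition strong_FWER_control ::
  "nat \<Rightarrow> (nat \<Rightarrow> 'a::zero set) \<Rightarrow> (nat \<Rightarrow> 'a \<Rightarrow> real measure) \<Rightarrow> ((nat \<Rightarrow> real) \<Rightarrow> nat \<Rightarrow> bool) \<Rightarrow> real \<Rightarrow> bool" where
  "strong_FWER_control K \<Theta> P D \<alpha> \<longleftrightarrow>
     (\<forall>h :: nat \<Rightarrow> bool. \<forall>\<theta> :: nat \<Rightarrow> 'a.
        (\<forall>k<K. (\<not> h k \<longrightarrow> \<theta> k = 0) \<and> (h k \<longrightarrow> \<theta> k \<in> \<Theta> k)) \<longrightarrow>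
        measure (joint_law K P \<theta>)
          {p \<in> space (joint_law K P \<theta>). (\<Sum>k<K. (if h k then 0 else 1) * (if D p k then 1 else 0::nat)) > 0}
        \<le> \<alpha>)"

definition proj0 :: "nat \<Rightarrow> nat set \<Rightarrow> (nat \<Rightarrow> real) \<Rightarrow> (nat \<Rightarrow> real)" where
  "proj0 K I p = restrict (\<lambda>k. if k \<in> I then p k else 0) {..<K}"

end

theory Submission
  imports Defs
begin

lemma cyl_sets:
  fixes M :: "nat \<Rightarrow> 'b measure"
  assumes fJ: "finite J"
    and A: "A \<in> sets (PiM I M)" and B: "\<And>k. k\<in>J \<Longrightarrow> B k \<in> sets (M k)"
  shows "{p\<in>space (PiM (I\<union>J) M). restrict p I \<in> A \<and> (\<forall>k\<in>J. p k \<in> B k)} \<in> sets (PiM (I\<union>J) M)"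
proof -
  have "{p\<in>space (PiM (I\<union>J) M). restrict p I \<in> A \<and> (\<forall>k\<in>J. p k \<in> B k)} = {p\<in>space (PiM (I\<union>J) M). restrict p I \<in> A} \<inter> ((\<Inter>k\<in>J. {p\<in>space (PiM (I\<union>J) M). p k \<in> B k}) \<inter> space (PiM (I\<union>J) M))"
    by auto
  also have "\<dots> \<in> sets (PiM (I\<union>J) M)"
  proof (rule sets.Int)
    show "{p\<in>space (PiM (I\<union>J) M). restrict p I \<in> A} \<in> sets (PiM (I\<union>J) M)"
      using measurable_restrict_subset[of I "I \<union> J" M] A by (auto intro: measurable_sets_Collect)
    have "\<And>k. k \<in> J \<Longrightarrow> {p\<in>space (PiM (I\<union>J) M). p k \<in> B k} \<in> sets (PiM (I\<union>J) M)"
    proof -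
      fix k assume k: "k \<in> J"
      have "{p\<in>space (PiM (I\<union>J) M). p k \<in> B k} = (\<lambda>p. p k) -` B k \<inter> space (PiM (I\<union>J) M)" by auto
      also have "\<dots> \<in> sets (PiM (I\<union>J) M)"
        using k B by (intro measurable_sets[OF measurable_component_singleton]) auto
      finally show "{p\<in>space (PiM (I\<union>J) M). p k \<in> B k} \<in> sets (PiM (I\<union>J) M)" .
    qed
    note hk = this
    show "(\<Inter>k\<in>J. {p\<in>space (PiM (I\<union>J) M). p k \<in> B k}) \<inter> space (PiM (I\<union>J) M) \<in> sets (PiM (I\<union>J) M)"
    proof (cases "J = {}")
      case True then show ?thesis by simp
    next
      case False
      have "(\<Inter>k\<in>J. {p\<in>space (PiM (I\<union>J) M). p k \<in> B k}) \<in> sets (PiM (I\<union>J) M)"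
        by (rule sets.countable_INT'[OF countable_finite[OF fJ] False]) (use hk in auto)
      then show ?thesis by (intro sets.Int) auto
    qed
  qed
  finally show ?thesis .
qed

lemma cyl_emeasure:
  fixes M :: "nat \<Rightarrow> 'b measure"
  assumes psf: "product_sigma_finite M" and IJ: "I \<inter> J = {}" and fI: "finite I" and fJ: "finite J"
    and A: "A \<in> sets (PiM I M)" and B: "\<And>k. k\<in>J \<Longrightarrow> B k \<in> sets (M k)"
  shows "emeasure (PiM (I\<union>J) M) {p\<in>space (PiM (I\<union>J) M). restrict p I \<in> A \<and> (\<forall>k\<in>J. p k \<in> B k)}
     = emeasure (PiM I M) A * (\<Prod>k\<in>J. emeasure (M k) (B k))"
proof -
  interpret product_sigma_finite M by fact
  interpret I: finite_product_sigma_finite M I by standard fact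
  interpret J: finite_product_sigma_finite M J by standard fact
  let ?C = "{p\<in>space (PiM (I\<union>J) M). restrict p I \<in> A \<and> (\<forall>k\<in>J. p k \<in> B k)}"
  have Cs: "?C \<in> sets (PiM (I\<union>J) M)"
  proof -
    have "?C = {p\<in>space (PiM (I\<union>J) M). restrict p I \<in> A} \<inter> ((\<Inter>k\<in>J. {p\<in>space (PiM (I\<union>J) M). p k \<in> B k}) \<inter> space (PiM (I\<union>J) M))"
      by auto
    also have "\<dots> \<in> sets (PiM (I\<union>J) M)"
    proof (rule sets.Int)
      show "{p\<in>space (PiM (I\<union>J) M). restrict p I \<in> A} \<in> sets (PiM (I\<union>J) M)"
        using measurable_restrict_subset[of I "I \<union> J" M] A by (auto intro: measurable_sets_Collect)
      have "\<And>k. k \<in> J \<Longrightarrow> {p\<in>space (PiM (I\<union>J) M). p k \<in> B k} \<in> sets (PiM (I\<union>J) M)"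
      proof -
        fix k assume k: "k \<in> J"
        have "{p\<in>space (PiM (I\<union>J) M). p k \<in> B k} = (\<lambda>p. p k) -` B k \<inter> space (PiM (I\<union>J) M)" by auto
        also have "\<dots> \<in> sets (PiM (I\<union>J) M)"
          using k B by (intro measurable_sets[OF measurable_component_singleton]) auto
        finally show "{p\<in>space (PiM (I\<union>J) M). p k \<in> B k} \<in> sets (PiM (I\<union>J) M)" .
      qed
      note hk = this
      show "(\<Inter>k\<in>J. {p\<in>space (PiM (I\<union>J) M). p k \<in> B k}) \<inter> space (PiM (I\<union>J) M) \<in> sets (PiM (I\<union>J) M)"
      proof (cases "J = {}")
        case True then show ?thesis by simp
      next
        case False
        have "(\<Inter>k\<in>J. {p\<in>space (PiM (I\<union>J) M). p k \<in> B k}) \<in> sets (PiM (I\<union>J) M)"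
          by (rule sets.countable_INT'[OF countable_finite[OF fJ] False]) (use hk in auto)
        then show ?thesis by (intro sets.Int) auto
      qed
    qed
    finally show ?thesis .
  qed
  have pre: "merge I J -` ?C \<inter> space (PiM I M \<Otimes>\<^sub>M PiM J M) = A \<times> PiE J B"
  proof (intro set_eqI iffI)
    fix z assume z: "z \<in> merge I J -` ?C \<inter> space (PiM I M \<Otimes>\<^sub>M PiM J M)"
    obtain x y where zxy: "z = (x, y)" by (cases z)
    have x: "x \<in> PiE I (\<lambda>i. space (M i))" and y: "y \<in> PiE J (\<lambda>i. space (M i))"
      using z zxy by (auto simp: space_pair_measure space_PiM)
    have rx: "restrict x I = x" using x by (simp add: restrict_def PiE_def extensional_def fun_eq_iff)
    have "restrict (merge I J (x, y)) I \<in> A" "\<forall>k\<in>J. merge I J (x, y) k \<in> B k"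
      using z zxy by auto
    then have "x \<in> A" "\<forall>k\<in>J. y k \<in> B k" using IJ rx by auto
    then show "z \<in> A \<times> PiE J B" using y zxy by (auto simp: PiE_def)
  next
    fix z assume z: "z \<in> A \<times> PiE J B"
    obtain x y where zxy: "z = (x, y)" by (cases z)
    have xA: "x \<in> A" and yB: "y \<in> PiE J B" using z zxy by auto
    have x: "x \<in> PiE I (\<lambda>i. space (M i))"
      using sets.sets_into_space[OF A] xA by (auto simp: space_PiM)
    have y: "y \<in> PiE J (\<lambda>i. space (M i))"
      using yB sets.sets_into_space[OF B] by (auto simp: PiE_def Pi_def)
    have rx: "restrict x I = x" using x by (simp add: restrict_def PiE_def extensional_def fun_eq_iff)
    have sp: "merge I J (x, y) \<in> space (PiM (I\<union>J) M)"
      using x y IJ by (auto simp: space_PiM PiE_iff)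
    show "z \<in> merge I J -` ?C \<inter> space (PiM I M \<Otimes>\<^sub>M PiM J M)"
      using zxy sp IJ rx xA yB x y by (auto simp: space_pair_measure space_PiM)
  qed
  have "emeasure (PiM (I\<union>J) M) ?C = emeasure (distr (PiM I M \<Otimes>\<^sub>M PiM J M) (PiM (I\<union>J) M) (merge I J)) ?C"
    by (simp add: distr_merge[OF IJ fI fJ])
  also have "\<dots> = emeasure (PiM I M \<Otimes>\<^sub>M PiM J M) (merge I J -` ?C \<inter> space (PiM I M \<Otimes>\<^sub>M PiM J M))"
    by (rule emeasure_distr[OF measurable_merge Cs])
  also have "\<dots> = emeasure (PiM I M) A * emeasure (PiM J M) (PiE J B)"
    unfolding pre using A B by (intro J.emeasure_pair_measure_Times sets_PiM_I_finite fJ) auto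
  also have "\<dots> = emeasure (PiM I M) A * (\<Prod>k\<in>J. emeasure (M k) (B k))"
    using B fJ by (simp add: emeasure_PiM)
  finally show ?thesis .
qed


lemma cyl_measure:
  fixes M :: "nat \<Rightarrow> 'b measure"
  assumes pp: "\<And>i. prob_space (M i)" and IJ: "I \<inter> J = {}" and fI: "finite I" and fJ: "finite J"
    and A: "A \<in> sets (PiM I M)" and B: "\<And>k. k\<in>J \<Longrightarrow> B k \<in> sets (M k)"
  shows "measure (PiM (I\<union>J) M) {p\<in>space (PiM (I\<union>J) M). restrict p I \<in> A \<and> (\<forall>k\<in>J. p k \<in> B k)}
     = measure (PiM I M) A * (\<Prod>k\<in>J. measure (M k) (B k))"
proof -
  interpret product_prob_space M by (simp add: product_prob_space_def product_prob_space_axioms_def product_sigma_finite_def pp prob_space_imp_sigma_finite)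
  have psf: "product_sigma_finite M" by unfold_locales
  have PrI: "prob_space (PiM I M)" by (rule prob_space_PiM) (use pp in auto)
  interpret PrIJ: prob_space "PiM (I\<union>J) M" by (rule prob_space_PiM) (use pp in auto)
  have "ennreal (measure (PiM (I\<union>J) M) {p\<in>space (PiM (I\<union>J) M). restrict p I \<in> A \<and> (\<forall>k\<in>J. p k \<in> B k)})
     = emeasure (PiM (I\<union>J) M) {p\<in>space (PiM (I\<union>J) M). restrict p I \<in> A \<and> (\<forall>k\<in>J. p k \<in> B k)}"
    by (simp add: PrIJ.emeasure_eq_measure)
  also have "\<dots> = emeasure (PiM I M) A * (\<Prod>k\<in>J. emeasure (M k) (B k))"
    by (rule cyl_emeasure[OF psf IJ fI fJ A B])
  also have "\<dots> = ennreal (measure (PiM I M) A) * (\<Prod>k\<in>J. ennreal (measure (M k) (B k)))"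
  proof -
    have "\<And>k. emeasure (M k) (B k) = ennreal (measure (M k) (B k))"
      using pp by (meson finite_measure.emeasure_eq_measure prob_space_def)
    moreover have "emeasure (PiM I M) A = ennreal (measure (PiM I M) A)"
      using PrI by (meson finite_measure.emeasure_eq_measure prob_space_def)
    ultimately show ?thesis by simp
  qed
  also have "\<dots> = ennreal (measure (PiM I M) A * (\<Prod>k\<in>J. measure (M k) (B k)))"
    by (simp add: prod_ennreal ennreal_mult prod_nonneg)
  finally show ?thesis by (simp add: prod_nonneg)
qed

lemma space_unif01[simp]: "space unif01 = {0..1}"
  by (simp add: unif01_def space_restrict_space)

lemma prob_space_unif01: "prob_space unif01"
  by (rule prob_spaceI) (simp add: unif01_def emeasure_restrict_space)

lemma Icc_sets_unif01: "0 \<le> a \<Longrightarrow> b \<le> 1 \<Longrightarrow> {a..b} \<in> sets unif01"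
  unfolding unif01_def by (subst sets_restrict_space_iff) auto

lemma mono_apply:
  fixes K :: nat
  assumes "monotone_policy K D" "p \<in> unit_cube K" "p' \<in> unit_cube K" "\<And>k. k<K \<Longrightarrow> p' k \<le> p k" "k < K" "D p k"
  shows "D p' k"
  using assms unfolding monotone_policy_def by blast

lemma restrict_in_cube: "(\<And>i. i<K \<Longrightarrow> 0 \<le> f i \<and> f i \<le> 1) \<Longrightarrow> restrict f {..<K} \<in> unit_cube K"
  by (auto simp: unit_cube_def)

definition fill :: "nat \<Rightarrow> nat set \<Rightarrow> real \<Rightarrow> (nat \<Rightarrow> real) \<Rightarrow> (nat \<Rightarrow> real)" where
  "fill K I c q = restrict (\<lambda>i. if i \<in> I then q i else c) {..<K}"

lemma proj0_fill: "proj0 K I q = fill K I 0 q"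
  by (simp add: proj0_def fill_def)

lemma fill_meas:
  fixes K :: nat
  assumes "c \<in> {0..1}"
  shows "fill K I c \<in> measurable (PiM I (\<lambda>_. unif01)) (PiM {..<K} (\<lambda>_. unif01))"
  unfolding fill_def
proof (rule measurable_restrict)
  fix i assume "i \<in> {..<K}"
  show "(\<lambda>x. if i \<in> I then x i else c) \<in> measurable (PiM I (\<lambda>_. unif01)) unif01"
    using assms by (cases "i \<in> I") auto
qed

lemma A2_box:
  fixes K :: nat
  assumes mono: "monotone_policy K D"
    and A2: "\<forall>i<K. \<forall>k<K. \<forall>p\<in>unit_cube K.
               ((\<lambda>t. if D (p(i := t)) k then 1 else (0::real))
                  \<longlongrightarrow> (if D (p(i := 0)) k then 1 else 0)) (at_right 0)"
    and fS: "finite S" and SK: "S \<subseteq> {..<K}" and k: "k < K"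
  shows "\<forall>p\<in>unit_cube K. (\<forall>i\<in>S. p i = 0) \<longrightarrow> D p k \<longrightarrow> (\<exists>\<delta>>0. \<delta> \<le> 1 \<and> D (\<lambda>i. if i\<in>S then \<delta> else p i) k)"
  using fS SK
proof (induction S rule: finite_induct)
  case empty
  then show ?case by (auto intro: exI[of _ 1])
next
  case (insert i S)
  show ?case
  proof (intro ballI impI)
    fix p assume p: "p \<in> unit_cube K" and z: "\<forall>j\<in>insert i S. p j = 0" and Dp: "D p k"
    have iK: "i < K" using insert by auto
    have "p(i := 0) = p" using z by auto
    then have lim: "((\<lambda>t. if D (p(i := t)) k then 1 else (0::real)) \<longlongrightarrow> 1) (at_right 0)"
      using A2 iK k p Dp by force
    have "eventually (\<lambda>t. (if D (p(i := t)) k then 1 else (0::real)) > 1/2) (at_right 0)"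
      by (rule order_tendstoD(1)[OF lim]) simp
    then obtain b where b: "b > 0" and hb: "\<And>t. 0 < t \<Longrightarrow> t < b \<Longrightarrow> (if D (p(i := t)) k then 1 else (0::real)) > 1/2"
      unfolding eventually_at_right_field by auto
    define t where "t = min (b/2) 1"
    have t: "0 < t" "t < b" "t \<le> 1" using b by (auto simp: t_def)
    have Dt: "D (p(i := t)) k" using hb[OF t(1) t(2)] by (auto split: if_splits)
    have p'c: "p(i := t) \<in> unit_cube K" using p t iK by (auto simp: unit_cube_def PiE_def extensional_def)
    have "\<forall>j\<in>S. (p(i := t)) j = 0" using z insert by auto
    then obtain \<delta>' where d': "\<delta>' > 0" "\<delta>' \<le> 1" "D (\<lambda>j. if j\<in>S then \<delta>' else (p(i := t)) j) k"
      using insert p'c Dt by blast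
    define \<delta> where "\<delta> = min t \<delta>'"
    have c1: "(\<lambda>j. if j\<in>S then \<delta>' else (p(i := t)) j) \<in> unit_cube K"
      using p t d' insert by (auto simp: unit_cube_def PiE_def extensional_def)
    have c2: "(\<lambda>j. if j\<in>insert i S then \<delta> else p j) \<in> unit_cube K"
      using p t d' insert by (auto simp: unit_cube_def PiE_def extensional_def Pi_iff \<delta>_def min_le_iff_disj)
    have "D (\<lambda>j. if j\<in>insert i S then \<delta> else p j) k"
      by (rule mono_apply[OF mono c1 c2 _ k d'(3)]) (auto simp: \<delta>_def)
    then show "\<exists>\<delta>>0. \<delta> \<le> 1 \<and> D (\<lambda>j. if j\<in>insert i S then \<delta> else p j) k"
      using t d' by (intro exI[of _ \<delta>]) (auto simp: \<delta>_def)
  qed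
qed


lemma sum_event:
  fixes K :: nat
  shows "((\<Sum>k<K. (if h k then 0 else 1) * (if D p k then 1 else 0::nat)) > 0) \<longleftrightarrow> (\<exists>k<K. \<not> h k \<and> D p k)"
proof -
  have "((\<Sum>k<K. (if h k then 0 else 1) * (if D p k then 1 else 0::nat)) = 0) \<longleftrightarrow> (\<forall>k\<in>{..<K}. (if h k then 0 else 1) * (if D p k then 1 else 0::nat) = 0)"
    by (rule sum_eq_0_iff) simp
  then have "((\<Sum>k<K. (if h k then 0 else 1) * (if D p k then 1 else 0::nat)) > 0) \<longleftrightarrow> \<not> (\<forall>k\<in>{..<K}. (if h k then 0 else 1) * (if D p k then 1 else 0::nat) = 0)"
    by (simp only: neq0_conv[symmetric])
  also have "\<dots> \<longleftrightarrow> (\<exists>k<K. \<not> h k \<and> D p k)" by auto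
  finally show ?thesis .
qed

lemma cube_space:
  fixes K :: nat
  shows "(\<And>k. k<K \<Longrightarrow> space (M k) = {0..1}) \<Longrightarrow> space (PiM {..<K} M) = unit_cube K"
  by (auto simp: space_PiM unit_cube_def intro!: PiE_cong)

lemma Bset_sets:
  fixes K :: nat
  assumes D_meas: "\<forall>k<K. Measurable.pred (PiM {..<K} (\<lambda>_. unif01)) (\<lambda>p. D p k)"
    and IK: "I \<subseteq> {..<K}" and c: "c \<in> {0..1}"
  shows "{q\<in>space (PiM I (\<lambda>_. unif01)). \<exists>k\<in>I. D (fill K I c q) k} \<in> sets (PiM I (\<lambda>_. unif01))"
proof -
  have "{q\<in>space (PiM I (\<lambda>_. unif01)). \<exists>k\<in>I. D (fill K I c q) k} = (\<Union>k\<in>I. {q\<in>space (PiM I (\<lambda>_. unif01)). D (fill K I c q) k})"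
    by auto
  also have "\<dots> \<in> sets (PiM I (\<lambda>_. unif01))"
  proof (rule sets.finite_UN)
    show "finite I" using IK finite_subset by blast
    fix k assume "k \<in> I"
    then have "{p\<in>space (PiM {..<K} (\<lambda>_. unif01)). D p k} \<in> sets (PiM {..<K} (\<lambda>_. unif01))"
      using D_meas IK by (auto simp: pred_def)
    then show "{q\<in>space (PiM I (\<lambda>_. unif01)). D (fill K I c q) k} \<in> sets (PiM I (\<lambda>_. unif01))"
      by (rule measurable_sets_Collect[OF fill_meas[OF c]])
  qed
  finally show ?thesis .
qed

lemma event_sets:
  fixes K :: nat
  assumes D_meas: "\<forall>k<K. Measurable.pred (PiM {..<K} (\<lambda>_. unif01)) (\<lambda>p. D p k)"
    and sM: "\<And>k. k<K \<Longrightarrow> sets (M k) = sets unif01"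
  shows "{p\<in>space (PiM {..<K} M). \<exists>k<K. \<not> h k \<and> D p k} \<in> sets (PiM {..<K} M)"
proof -
  have fin: "finite {k. k<K \<and> \<not> h k}" by auto
  have ss: "sets (PiM {..<K} M) = sets (PiM {..<K} (\<lambda>_. unif01))"
    by (rule sets_PiM_cong) (auto simp: sM)
  have sp: "space (PiM {..<K} M) = space (PiM {..<K} (\<lambda>_. unif01))"
    by (rule sets_eq_imp_space_eq[OF ss])
  have "{p\<in>space (PiM {..<K} M). \<exists>k<K. \<not> h k \<and> D p k} = (\<Union>k\<in>{k. k<K \<and> \<not> h k}. {p\<in>space (PiM {..<K} (\<lambda>_. unif01)). D p k})"
    unfolding sp by auto
  also have "\<dots> \<in> sets (PiM {..<K} M)"
    unfolding ss using D_meas fin by (intro sets.finite_UN) (auto simp: pred_def)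
  finally show ?thesis .
qed

theorem proposition2p1:
  fixes K :: nat
    and \<Theta> :: "nat \<Rightarrow> 'a::zero set"
    and P :: "nat \<Rightarrow> 'a \<Rightarrow> real measure"
    and D :: "(nat \<Rightarrow> real) \<Rightarrow> nat \<Rightarrow> bool"
    and \<alpha> :: real
  assumes null_uniform: "\<forall>k<K. P k 0 = unif01"
    and alt_prob: "\<forall>k<K. \<forall>\<theta>\<in>\<Theta> k. prob_space (P k \<theta>) \<and> sets (P k \<theta>) = sets unif01"
    and alt_power: "\<forall>k<K. \<exists>s :: nat \<Rightarrow> 'a. (\<forall>j. s j \<in> \<Theta> k) \<and>
               (\<forall>\<epsilon>>0. (\<lambda>j. measure (P k (s j)) {x \<in> space (P k (s j)). x < \<epsilon>}) \<longlonglongrightarrow> 1)"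
    and D_meas: "\<forall>k<K. Measurable.pred (PiM {..<K} (\<lambda>_. unif01)) (\<lambda>p. D p k)"
    and D_mono: "monotone_policy K D"
    and A2: "\<forall>i<K. \<forall>k<K. \<forall>p\<in>unit_cube K.
               ((\<lambda>t. if D (p(i := t)) k then 1 else (0::real))
                  \<longlongrightarrow> (if D (p(i := 0)) k then 1 else 0)) (at_right 0)"
  shows "strong_FWER_control K \<Theta> P D \<alpha> \<longleftrightarrow>
         (\<forall>I \<subseteq> {..<K}.
            integral\<^sup>L (PiM I (\<lambda>_. unif01))
              (\<lambda>q. Max (insert 0 ((\<lambda>k. if D (proj0 K I q) k then 1 else 0::real) ` I))) \<le> \<alpha>)"
proof -
  have psp: "space (P k \<theta>) = {0..1}" if "k < K" "\<theta> \<in> \<Theta> k" for k \<theta>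
    using sets_eq_imp_space_eq[of "P k \<theta>" unif01] alt_prob that by simp
  have pu: "prob_space unif01" by (rule prob_space_unif01)
  define Bset where "Bset I = {q\<in>space (PiM I (\<lambda>_. unif01)). \<exists>k\<in>I. D (proj0 K I q) k}" for I
  have Bs: "Bset I \<in> sets (PiM I (\<lambda>_. unif01))" if "I \<subseteq> {..<K}" for I
    unfolding Bset_def proj0_fill by (rule Bset_sets[OF D_meas that]) simp
  have int_eq: "integral\<^sup>L (PiM I (\<lambda>_. unif01))
              (\<lambda>q. Max (insert 0 ((\<lambda>k. if D (proj0 K I q) k then 1 else 0::real) ` I)))
        = measure (PiM I (\<lambda>_. unif01)) (Bset I)" if IK: "I \<subseteq> {..<K}" for I
  proof -
    have fI: "finite I" using IK finite_subset by blast
    have "integral\<^sup>L (PiM I (\<lambda>_. unif01))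
              (\<lambda>q. Max (insert 0 ((\<lambda>k. if D (proj0 K I q) k then 1 else 0::real) ` I)))
        = integral\<^sup>L (PiM I (\<lambda>_. unif01)) (indicator (Bset I))"
    proof (rule Bochner_Integration.integral_cong[OF refl])
      fix q assume q: "q \<in> space (PiM I (\<lambda>_. unif01))"
      show "Max (insert 0 ((\<lambda>k. if D (proj0 K I q) k then 1 else 0::real) ` I)) = indicator (Bset I) q"
      proof (cases "\<exists>k\<in>I. D (proj0 K I q) k")
        case True
        then have "Max (insert 0 ((\<lambda>k. if D (proj0 K I q) k then 1 else 0::real) ` I)) = 1"
          using fI by (intro Max_eqI) force+
        then show ?thesis using True q by (simp add: Bset_def indicator_def)
      next
        case False
        then have eq: "insert 0 ((\<lambda>k. if D (proj0 K I q) k then 1 else 0::real) ` I) = {0}" by auto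
        show ?thesis by (subst eq) (use False q in \<open>simp add: Bset_def indicator_def\<close>)
      qed
    qed
    also have "\<dots> = measure (PiM I (\<lambda>_. unif01)) (Bset I)"
      by (simp add: Bset_def Int_absorb2)
    finally show ?thesis .
  qed
  show ?thesis
  proof
    assume FW: "strong_FWER_control K \<Theta> P D \<alpha>"
    show "\<forall>I \<subseteq> {..<K}.
            integral\<^sup>L (PiM I (\<lambda>_. unif01))
              (\<lambda>q. Max (insert 0 ((\<lambda>k. if D (proj0 K I q) k then 1 else 0::real) ` I))) \<le> \<alpha>"
    proof (intro allI impI)
      fix I assume IK: "I \<subseteq> {..<K}"
      define J where "J = {..<K} - I"
      have UIJ: "I \<union> J = {..<K}" and IJ: "I \<inter> J = {}" and fJ: "finite J"
        using IK by (auto simp: J_def)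
      have fI: "finite I" using IK finite_subset by blast
      define S where "S k = (SOME s :: nat \<Rightarrow> 'a. (\<forall>j. s j \<in> \<Theta> k) \<and>
               (\<forall>\<epsilon>>0. (\<lambda>j. measure (P k (s j)) {x \<in> space (P k (s j)). x < \<epsilon>}) \<longlonglongrightarrow> 1))" for k
      have S: "(\<forall>j. S k j \<in> \<Theta> k) \<and>
               (\<forall>\<epsilon>>0. (\<lambda>j. measure (P k (S k j)) {x \<in> space (P k (S k j)). x < \<epsilon>}) \<longlonglongrightarrow> 1)" if kK: "k < K" for k
        unfolding S_def by (rule someI_ex[OF alt_power[rule_format, OF kK]])
      have S\<Theta>: "\<And>k j. k < K \<Longrightarrow> S k j \<in> \<Theta> k" using S by blast
      define \<theta> where "\<theta> j = (\<lambda>k. if k \<in> I then 0 else S k j)" for j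
      define h where "h = (\<lambda>k. k \<notin> I)"
      define M where "M j = (\<lambda>k. if k<K then P k (\<theta> j k) else unif01)" for j
      have MI: "M j k = unif01" if "k \<in> I" for j k
        using that null_uniform IK by (auto simp: M_def \<theta>_def)
      have MJ: "M j k = P k (S k j)" if "k \<in> J" for j k
        using that by (auto simp: M_def \<theta>_def J_def)
      have pM: "prob_space (M j k)" for j k
        using S\<Theta> alt_prob null_uniform pu IK by (cases "k < K"; cases "k \<in> I") (auto simp: M_def \<theta>_def)
      have sM: "sets (M j k) = sets unif01" for j k
        using S\<Theta> alt_prob null_uniform IK by (cases "k < K"; cases "k \<in> I") (auto simp: M_def \<theta>_def)
      have spM: "space (M j k) = {0..1}" for j k
        using sets_eq_imp_space_eq[OF sM[of j k]] by simp
      have JL: "joint_law K P (\<theta> j) = PiM {..<K} (M j)" for j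
        unfolding joint_law_def by (rule PiM_cong) (auto simp: M_def)
      have PiI: "PiM I (M j) = PiM I (\<lambda>_. unif01)" for j
        by (rule PiM_cong) (auto simp: MI)
      have FWj: "measure (PiM {..<K} (M j)) {p\<in>space (PiM {..<K} (M j)). \<exists>k<K. \<not> h k \<and> D p k} \<le> \<alpha>" for j
      proof -
        have c: "\<And>k. k<K \<Longrightarrow> (\<not> h k \<longrightarrow> \<theta> j k = 0) \<and> (h k \<longrightarrow> \<theta> j k \<in> \<Theta> k)"
          using S\<Theta> by (auto simp: h_def \<theta>_def)
        from FW[unfolded strong_FWER_control_def, rule_format, OF c]
        show ?thesis unfolding JL sum_event .
      qed
      define \<delta> where "\<delta> n = inverse (real (Suc n))" for n
      have \<delta>: "0 < \<delta> n" "\<delta> n \<le> 1" for n by (auto simp: \<delta>_def inverse_le_1_iff)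
      have \<delta>0: "0 \<le> \<delta> n" for n using \<delta>(1)[of n] by simp
      define A where "A n = {q\<in>space (PiM I (\<lambda>_. unif01)). \<exists>k\<in>I. D (fill K I (\<delta> n) q) k}" for n
      have As: "A n \<in> sets (PiM I (\<lambda>_. unif01))" for n
        unfolding A_def by (rule Bset_sets[OF D_meas IK]) (use \<delta>[of n] in auto)
      have qsp: "q i \<in> {0..1}" if "q \<in> space (PiM I (\<lambda>_. unif01))" "i \<in> I" for q i
        using that by (auto simp: space_PiM PiE_def Pi_def)
      have fill_cube: "fill K I c q \<in> unit_cube K" if "q \<in> space (PiM I (\<lambda>_. unif01))" "c \<in> {0..1}" for q c
        unfolding fill_def using qsp[OF that(1)] that(2) by (intro restrict_in_cube) auto
      have An_le: "measure (PiM I (\<lambda>_. unif01)) (A n) \<le> \<alpha>" for n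
      proof -
        let ?C = "\<lambda>j. {p\<in>space (PiM (I\<union>J) (M j)). restrict p I \<in> A n \<and> (\<forall>k\<in>J. p k \<in> {0..\<delta> n})}"
        let ?E = "\<lambda>j. {p\<in>space (PiM {..<K} (M j)). \<exists>k<K. \<not> h k \<and> D p k}"
        have Isets: "{0..\<delta> n} \<in> sets (M j k)" for j k
          unfolding sM using \<delta>[of n] by (intro Icc_sets_unif01) auto
        have bound: "measure (PiM I (\<lambda>_. unif01)) (A n) * (\<Prod>k\<in>J. measure (M j k) {0..\<delta> n}) \<le> \<alpha>" for j
        proof -
          have sub: "?C j \<subseteq> ?E j"
          proof
            fix p assume p: "p \<in> ?C j"
            then have psp: "p \<in> space (PiM {..<K} (M j))" and rA: "restrict p I \<in> A n"
              and pJ: "\<forall>k\<in>J. p k \<in> {0..\<delta> n}" using UIJ by auto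
            have pc: "p \<in> unit_cube K" using psp cube_space[of K "M j"] spM by auto
            obtain k where k: "k \<in> I" "D (fill K I (\<delta> n) (restrict p I)) k" using rA by (auto simp: A_def)
            have rsp: "restrict p I \<in> space (PiM I (\<lambda>_. unif01))" using rA by (auto simp: A_def)
            have "D p k"
            proof (rule mono_apply[OF D_mono fill_cube[OF rsp] pc])
              fix i assume "i < K"
              then show "p i \<le> fill K I (\<delta> n) (restrict p I) i"
                using pJ by (cases "i \<in> I") (auto simp: fill_def J_def)
            qed (use k IK \<delta>[of n] \<delta>0[of n] in auto)
            then show "p \<in> ?E j" using psp k IK by (auto simp: h_def)
          qed
          have Es: "?E j \<in> sets (PiM {..<K} (M j))"
            by (rule event_sets[OF D_meas]) (simp add: sM)
          have "measure (PiM (I\<union>J) (M j)) (?C j) = measure (PiM I (M j)) (A n) * (\<Prod>k\<in>J. measure (M j k) {0..\<delta> n})"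
            by (rule cyl_measure[OF pM IJ fI fJ]) (use As PiI Isets in auto)
          then have "measure (PiM I (\<lambda>_. unif01)) (A n) * (\<Prod>k\<in>J. measure (M j k) {0..\<delta> n})
              = measure (PiM {..<K} (M j)) (?C j)" using PiI UIJ by simp
          also have "\<dots> \<le> measure (PiM {..<K} (M j)) (?E j)"
            by (rule finite_measure.finite_measure_mono[OF prob_space.finite_measure[OF prob_space_PiM[OF pM]] sub Es])
          also have "\<dots> \<le> \<alpha>" by (rule FWj)
          finally show ?thesis .
        qed
        have lim1: "(\<lambda>j. measure (M j k) {0..\<delta> n}) \<longlonglongrightarrow> 1" if kJ: "k \<in> J" for k
        proof (rule tendsto_sandwich)
          have kK: "k < K" using kJ by (auto simp: J_def)
          show "(\<lambda>j. measure (P k (S k j)) {x \<in> space (P k (S k j)). x < \<delta> n}) \<longlonglongrightarrow> 1"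
            using S[OF kK] \<delta>[of n] by blast
          show "(\<lambda>j. 1::real) \<longlonglongrightarrow> 1" by simp
          show "eventually (\<lambda>j. measure (P k (S k j)) {x \<in> space (P k (S k j)). x < \<delta> n} \<le> measure (M j k) {0..\<delta> n}) sequentially"
          proof (intro always_eventually allI)
            fix j
            show "measure (P k (S k j)) {x \<in> space (P k (S k j)). x < \<delta> n} \<le> measure (M j k) {0..\<delta> n}"
              unfolding MJ[OF kJ, symmetric]
              using Isets[of j k] pM[of j k] spM[of j k]
              by (intro finite_measure.finite_measure_mono prob_space.finite_measure) auto
          qed
          show "eventually (\<lambda>j. measure (M j k) {0..\<delta> n} \<le> 1) sequentially"
            using pM by (intro always_eventually allI) (simp add: prob_space.prob_le_1)
        qed
        have "(\<lambda>j. measure (PiM I (\<lambda>_. unif01)) (A n) * (\<Prod>k\<in>J. measure (M j k) {0..\<delta> n}))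
           \<longlonglongrightarrow> measure (PiM I (\<lambda>_. unif01)) (A n) * (\<Prod>k\<in>J. 1)"
          using lim1 by (intro tendsto_mult_left tendsto_prod) auto
        then show ?thesis using bound by (intro LIMSEQ_le_const2) auto
      qed
      have inc: "incseq A"
      proof (rule incseq_SucI)
        fix n
        show "A n \<subseteq> A (Suc n)"
        proof
          fix q assume q: "q \<in> A n"
          then obtain k where k: "k \<in> I" "D (fill K I (\<delta> n) q) k" and qs: "q \<in> space (PiM I (\<lambda>_. unif01))"
            by (auto simp: A_def)
          have "D (fill K I (\<delta> (Suc n)) q) k"
          proof (rule mono_apply[OF D_mono fill_cube[OF qs] fill_cube[OF qs]])
            fix i assume "i < K"
            show "fill K I (\<delta> (Suc n)) q i \<le> fill K I (\<delta> n) q i"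
              by (auto simp: fill_def \<delta>_def field_simps)
          qed (use k IK \<delta>[of n] \<delta>[of "Suc n"] \<delta>0[of n] \<delta>0[of "Suc n"] in auto)
          then show "q \<in> A (Suc n)" using k qs by (auto simp: A_def)
        qed
      qed
      have UA: "(\<Union>n. A n) = Bset I"
      proof
        show "(\<Union>n. A n) \<subseteq> Bset I"
        proof
          fix q assume "q \<in> (\<Union>n. A n)"
          then obtain n k where k: "k \<in> I" "D (fill K I (\<delta> n) q) k" and qs: "q \<in> space (PiM I (\<lambda>_. unif01))"
            by (auto simp: A_def)
          have "D (fill K I 0 q) k"
          proof (rule mono_apply[OF D_mono fill_cube[OF qs] fill_cube[OF qs]])
            fix i assume "i < K"
            show "fill K I 0 q i \<le> fill K I (\<delta> n) q i"
              using \<delta>[of n] by (auto simp: fill_def)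
          qed (use k IK \<delta>[of n] \<delta>0[of n] in auto)
          then show "q \<in> Bset I" using k qs by (auto simp: Bset_def proj0_fill)
        qed
        show "Bset I \<subseteq> (\<Union>n. A n)"
        proof
          fix q assume "q \<in> Bset I"
          then obtain k where k: "k \<in> I" "D (fill K I 0 q) k" and qs: "q \<in> space (PiM I (\<lambda>_. unif01))"
            by (auto simp: Bset_def proj0_fill)
          have kK: "k < K" using k IK by auto
          have JK: "J \<subseteq> {..<K}" by (auto simp: J_def)
          have f0: "fill K I 0 q \<in> unit_cube K" by (rule fill_cube[OF qs]) simp
          have "\<forall>i\<in>J. fill K I 0 q i = 0" by (auto simp: fill_def J_def)
          then obtain d where d: "d > 0" "d \<le> 1" "D (\<lambda>i. if i\<in>J then d else fill K I 0 q i) k"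
            using A2_box[OF D_mono A2 fJ JK kK] f0 k by blast
          obtain n where n: "inverse (real (Suc n)) < d" using reals_Archimedean[OF d(1)] by blast
          have c: "(\<lambda>i. if i\<in>J then d else fill K I 0 q i) \<in> unit_cube K"
            using f0 d JK by (auto simp: unit_cube_def PiE_def Pi_def extensional_def fill_def)
          have "D (fill K I (\<delta> n) q) k"
          proof (rule mono_apply[OF D_mono c fill_cube[OF qs]])
            fix i assume "i < K"
            then show "fill K I (\<delta> n) q i \<le> (if i\<in>J then d else fill K I 0 q i)"
              using n by (auto simp: fill_def J_def \<delta>_def)
          qed (use kK d \<delta>[of n] \<delta>0[of n] in auto)
          then show "q \<in> (\<Union>n. A n)" using k qs by (auto simp: A_def)
        qed
      qed
      have "(\<lambda>n. measure (PiM I (\<lambda>_. unif01)) (A n)) \<longlonglongrightarrow> measure (PiM I (\<lambda>_. unif01)) (\<Union>n. A n)"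
        using As inc
        by (intro finite_measure.finite_Lim_measure_incseq prob_space.finite_measure prob_space_PiM) (auto simp: pu)
      then have "measure (PiM I (\<lambda>_. unif01)) (Bset I) \<le> \<alpha>"
        unfolding UA using An_le by (intro LIMSEQ_le_const2) auto
      then show "integral\<^sup>L (PiM I (\<lambda>_. unif01))
              (\<lambda>q. Max (insert 0 ((\<lambda>k. if D (proj0 K I q) k then 1 else 0::real) ` I))) \<le> \<alpha>"
        using int_eq[OF IK] by simp
    qed
  next
    assume INT: "\<forall>I \<subseteq> {..<K}.
            integral\<^sup>L (PiM I (\<lambda>_. unif01))
              (\<lambda>q. Max (insert 0 ((\<lambda>k. if D (proj0 K I q) k then 1 else 0::real) ` I))) \<le> \<alpha>"
    show "strong_FWER_control K \<Theta> P D \<alpha>"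
      unfolding strong_FWER_control_def
    proof (intro allI impI)
      fix h :: "nat \<Rightarrow> bool" and \<theta> :: "nat \<Rightarrow> 'a"
      assume cond: "\<forall>k<K. (\<not> h k \<longrightarrow> \<theta> k = 0) \<and> (h k \<longrightarrow> \<theta> k \<in> \<Theta> k)"
      define I where "I = {k. k<K \<and> \<not> h k}"
      define J where "J = {k. k<K \<and> h k}"
      define M where "M = (\<lambda>k. if k<K then P k (\<theta> k) else unif01)"
      have IK: "I \<subseteq> {..<K}" and UIJ: "I \<union> J = {..<K}" and IJ: "I \<inter> J = {}"
        and fI: "finite I" and fJ: "finite J" by (auto simp: I_def J_def)
      have MI: "M k = unif01" if "k \<in> I" for k
        using that null_uniform cond by (auto simp: M_def I_def)
      have pM: "prob_space (M k)" for k
        using cond alt_prob null_uniform pu by (cases "k < K"; cases "h k") (auto simp: M_def)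
      have sM: "sets (M k) = sets unif01" for k
        using cond alt_prob null_uniform by (cases "k < K"; cases "h k") (auto simp: M_def)
      have spM: "space (M k) = {0..1}" for k
        using sets_eq_imp_space_eq[OF sM[of k]] by simp
      have JL: "joint_law K P \<theta> = PiM {..<K} M"
        unfolding joint_law_def by (rule PiM_cong) (auto simp: M_def)
      have PiI: "PiM I M = PiM I (\<lambda>_. unif01)"
        by (rule PiM_cong) (auto simp: MI)
      let ?E = "{p \<in> space (PiM {..<K} M). \<exists>k<K. \<not> h k \<and> D p k}"
      let ?C = "{p\<in>space (PiM (I\<union>J) M). restrict p I \<in> Bset I \<and> (\<forall>k\<in>J. p k \<in> space (M k))}"
      have Cs: "?C \<in> sets (PiM (I\<union>J) M)"
        by (rule cyl_sets[OF fJ]) (use Bs[OF IK] PiI in auto)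
      have sub: "?E \<subseteq> ?C"
      proof
        fix p assume p: "p \<in> ?E"
        then obtain k where k: "k < K" "\<not> h k" "D p k" by auto
        have psp0: "p \<in> space (PiM {..<K} M)" using p by blast
        have pc: "p \<in> unit_cube K" using psp0 cube_space[of K M, OF spM] by simp
        have psp: "p \<in> space (PiM (I\<union>J) M)" using psp0 UIJ by simp
        have p01: "0 \<le> p i \<and> p i \<le> 1" if "i < K" for i
        proof -
          have "p i \<in> {0..1}" using PiE_mem[OF pc[unfolded unit_cube_def]] that by simp
          then show ?thesis by simp
        qed
        have rI: "restrict p I \<in> space (PiM I (\<lambda>_. unif01))"
          unfolding space_PiM space_unif01 restrict_PiE_iff using p01 IK by auto
        have pr: "proj0 K I (restrict p I) = proj0 K I p" unfolding proj0_def by (rule restrict_ext) simp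
        have pc2: "proj0 K I p \<in> unit_cube K"
          unfolding proj0_def using p01 by (intro restrict_in_cube) simp
        have "D (proj0 K I p) k"
        proof (rule mono_apply[OF D_mono pc pc2 _ k(1) k(3)])
          fix i assume "i < K" then show "proj0 K I p i \<le> p i" using p01[of i] by (simp add: proj0_def)
        qed
        then have kI: "k \<in> I" and "D (proj0 K I (restrict p I)) k" using k pr by (auto simp: I_def)
        then have "restrict p I \<in> Bset I" using rI unfolding Bset_def by blast
        moreover have "\<forall>k\<in>J. p k \<in> space (M k)" using p01 by (simp add: spM J_def)
        ultimately show "p \<in> ?C" using psp by blast
      qed
      have "measure (PiM {..<K} M) ?E \<le> measure (PiM {..<K} M) ?C"
      proof -
        have Cs': "?C \<in> sets (PiM {..<K} M)" using Cs UIJ by simp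
        show ?thesis
          by (rule finite_measure.finite_measure_mono[OF prob_space.finite_measure[OF prob_space_PiM[OF pM]] sub Cs'])
      qed
      also have "\<dots> = measure (PiM I M) (Bset I) * (\<Prod>k\<in>J. measure (M k) (space (M k)))"
        using cyl_measure[OF pM IJ fI fJ, where A="Bset I" and B="\<lambda>k. space (M k)"] Bs[OF IK] PiI UIJ by simp
      also have "\<dots> = measure (PiM I (\<lambda>_. unif01)) (Bset I)"
        using pM by (simp add: PiI prob_space.prob_space)
      also have "\<dots> \<le> \<alpha>" using INT[rule_format, OF IK] int_eq[OF IK] by simp
      finally have "measure (PiM {..<K} M) ?E \<le> \<alpha>" .
      then show "measure (joint_law K P \<theta>)
          {p \<in> space (joint_law K P \<theta>). (\<Sum>k<K. (if h k then 0 else 1) * (if D p k then 1 else 0::nat)) > 0}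
        \<le> \<alpha>" unfolding JL sum_event .
    qed
  qed
qed

end
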